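(* Let $J\subset\mathbb{C}$ be a Jordan curve which has continuously turning tangents in a neighborhood of a point $A_0\in J$. Then for every (nondegenerate) triangle $T$ there exist points $A_1,A_2\in J$ such that the triangle $A_0A_1A_2$ is similar to $T$.
   Context: "$J$ has continuously turning tangents in a neighborhood of $A_0$" means: there is an open arc $B\subset J$ containing $A_0$ admitting a parametrization $h:(\alpha,\beta)\to B$ that is continuously differentiable with $h'(t)\neq0$. *)

theory Defs
  imports "HOL-Analysis.Analysis"
begin

definition jordan_curve :: "complex set \<Rightarrow> bool" where
  "jordan_curve J \<longleftrightarrow> (\<exists>g. simple_path g \<and> pathfinish g = pathstart g \<and> path_image g = J)"

definition cont_turning_tangents_near :: "complex set \<Rightarrow> complex \<Rightarrow> bool" where
  "cont_turning_tangents_near J A0 \<longleftrightarrow>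
     (\<exists>(\<alpha>::real) \<beta> (h::real \<Rightarrow> complex) h'. \<alpha> < \<beta> \<and>
        inj_on h {\<alpha><..<\<beta>} \<and> h ` {\<alpha><..<\<beta>} \<subseteq> J \<and>
        openin (top_of_set J) (h ` {\<alpha><..<\<beta>}) \<and>
        A0 \<in> h ` {\<alpha><..<\<beta>} \<and>
        (\<forall>t\<in>{\<alpha><..<\<beta>}. (h has_vector_derivative h' t) (at t)) \<and>
        continuous_on {\<alpha><..<\<beta>} h' \<and>
        (\<forall>t\<in>{\<alpha><..<\<beta>}. h' t \<noteq> 0))"

definition similar_tri :: "complex \<Rightarrow> complex \<Rightarrow> complex \<Rightarrow> complex \<Rightarrow> complex \<Rightarrow> complex \<Rightarrow> bool" where
  "similar_tri A0 A1 A2 a b c \<longleftrightarrow>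
     (\<exists>r>0. dist A0 A1 = r * dist a b \<and> dist A1 A2 = r * dist b c \<and> dist A2 A0 = r * dist c a)"

end

theory Submission
  imports Defs
begin


lemma cone_convex:
  fixes m r0 \<sigma> :: real
  assumes "m \<ge> 0"
  shows "convex {w::complex. \<sigma> * Im w > m * \<bar>Re w\<bar> \<and> cmod w < r0}"
proof -
  have e: "{w::complex. \<sigma> * Im w > m * \<bar>Re w\<bar> \<and> cmod w < r0} =
     {w. inner (Complex (-m) \<sigma>) w > 0} \<inter> {w. inner (Complex m \<sigma>) w > 0} \<inter> ball 0 r0"
    proof -
    have "\<And>w::complex. m * \<bar>Re w\<bar> \<ge> m * Re w \<and> m * \<bar>Re w\<bar> \<ge> - (m * Re w)"
      using assms by (metis abs_ge_self abs_ge_minus_self mult_left_mono mult_minus_right)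
    moreover have "\<And>w::complex. m * \<bar>Re w\<bar> = m * Re w \<or> m * \<bar>Re w\<bar> = - (m * Re w)"
      by (simp add: abs_if)
    ultimately show ?thesis
      by (auto simp: inner_complex_def) (smt (verit))+
  qed
  show ?thesis unfolding e
    by (intro convex_Int convex_halfspace_gt convex_ball)
qed

lemma conn_split:
  assumes "connected C" "open X" "open Y" "X \<inter> Y = {}" "C \<subseteq> X \<union> Y" "x \<in> C" "x \<in> X" "y \<in> C" "y \<in> Y"
  shows False
  using connectedD[OF assms(1,2,3)] assms by blast

lemma sides_lemma:
  fixes Jw X Y :: "complex set"
  assumes XY: "open X" "open Y" "X \<inter> Y = {}" "X \<union> Y = - Jw" and fr: "0 \<in> closure Y"
    and r0: "r0 > 0" and m: "0 < m" "m \<le> 1"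
    and inj: "\<forall>w1\<in>Jw. \<forall>w2\<in>Jw. cmod w1 < r0 \<longrightarrow> cmod w2 < r0 \<longrightarrow> Re w1 = Re w2 \<longrightarrow> w1 = w2"
    and cX: "{w. 1 * Im w > m * \<bar>Re w\<bar> \<and> cmod w < r0} \<subseteq> X"
    and cX': "{w. (-1) * Im w > m * \<bar>Re w\<bar> \<and> cmod w < r0} \<subseteq> X"
  shows False
proof -
  obtain p where pY: "p \<in> Y" and pd: "dist p 0 < r0/4"
    using fr r0 unfolding closure_approachable by (metis divide_pos_pos zero_less_numeral)
  have pn: "cmod p < r0/4" using pd by simp
  have rp: "\<bar>Re p\<bar> < r0/4" "\<bar>Im p\<bar> < r0/4"
    using pn abs_Re_le_cmod abs_Im_le_cmod by (meson le_less_trans)+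
  define top where "top = Complex (Re p) (r0/2)"
  define bot where "bot = Complex (Re p) (-(r0/2))"
  have "cmod top \<le> \<bar>Re p\<bar> + r0/2" unfolding top_def
    using cmod_le[of "Complex (Re p) (r0/2)"] r0 by simp
  hence topn: "cmod top < r0" using rp by linarith
  have "cmod bot \<le> \<bar>Re p\<bar> + r0/2" unfolding bot_def
    using cmod_le[of "Complex (Re p) (-(r0/2))"] r0 by simp
  hence botn: "cmod bot < r0" using rp by linarith
  have "m * \<bar>Re p\<bar> \<le> \<bar>Re p\<bar>" using m by (simp add: mult_left_le_one_le)
  hence topX: "top \<in> X" and botX: "bot \<in> X"
    using cX cX' topn botn rp unfolding top_def bot_def by auto
  have pJ: "p \<notin> Jw" using pY XY by auto
  have segball: "closed_segment p q \<subseteq> ball 0 r0" if "cmod q < r0" for q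
    using pn that r0 by (intro closed_segment_subset) (auto simp: convex_ball)
  have meet: "\<exists>w\<in>closed_segment p q. w \<in> Jw" if "q \<in> X" for q
  proof (rule ccontr)
    assume "\<not> ?thesis"
    hence "closed_segment p q \<subseteq> X \<union> Y" using XY by auto
    then show False
      using conn_split[of "closed_segment p q" Y X p q] XY pY that by auto
  qed
  obtain w1 where w1: "w1 \<in> closed_segment p top" "w1 \<in> Jw" using meet topX by blast
  obtain w2 where w2: "w2 \<in> closed_segment p bot" "w2 \<in> Jw" using meet botX by blast
  obtain s1 where s1: "0 \<le> s1" "s1 \<le> 1" "w1 = (1 - s1) *\<^sub>R p + s1 *\<^sub>R top"
    using w1(1) unfolding closed_segment_def by blast
  obtain s2 where s2: "0 \<le> s2" "s2 \<le> 1" "w2 = (1 - s2) *\<^sub>R p + s2 *\<^sub>R bot"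
    using w2(1) unfolding closed_segment_def by blast
  have re1: "Re w1 = Re p" unfolding s1(3) top_def by (simp add: algebra_simps)
  have re2: "Re w2 = Re p" unfolding s2(3) bot_def by (simp add: algebra_simps)
  have im1: "Im w1 = Im p + s1 * (r0/2 - Im p)" unfolding s1(3) top_def by (simp add: algebra_simps)
  have im2: "Im w2 = Im p - s2 * (r0/2 + Im p)" unfolding s2(3) bot_def by (simp add: algebra_simps)
  have "s1 * (r0/2 - Im p) \<ge> 0" using s1 rp by (intro mult_nonneg_nonneg) auto
  hence i1: "Im w1 \<ge> Im p" using im1 by linarith
  have "s2 * (r0/2 + Im p) \<ge> 0" using s2 rp by (intro mult_nonneg_nonneg) auto
  hence i2: "Im w2 \<le> Im p" using im2 by linarith
  have n1: "cmod w1 < r0" using segball[OF topn] w1 by auto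
  have n2: "cmod w2 < r0" using segball[OF botn] w2 by auto
  have "w1 = w2" using inj w1 w2 n1 n2 re1 re2 by metis
  hence "w1 = p" using i1 i2 re1 by (simp add: complex_eq_iff)
  thus False using w1 pJ by simp
qed

lemma core:
  fixes \<gamma> :: "real \<Rightarrow> complex"
  assumes sp: "simple_path \<gamma>" "pathfinish \<gamma> = pathstart \<gamma>" and Jw: "path_image \<gamma> = Jw" "0 \<in> Jw"
    and r0: "r0 > 0" and m: "0 < m" "m \<le> 1"
    and cone: "\<forall>w\<in>Jw. cmod w < r0 \<longrightarrow> \<bar>Im w\<bar> \<le> m * \<bar>Re w\<bar>"
    and inj: "\<forall>w1\<in>Jw. \<forall>w2\<in>Jw. cmod w1 < r0 \<longrightarrow> cmod w2 < r0 \<longrightarrow> Re w1 = Re w2 \<longrightarrow> w1 = w2"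
    and C: "connected C" "q1 \<in> C" "q2 \<in> C"
    and q1: "1 * Im q1 > m * \<bar>Re q1\<bar>" "cmod q1 < r0"
    and q2: "(-1) * Im q2 > m * \<bar>Re q2\<bar>" "cmod q2 < r0"
  shows "C \<inter> Jw \<noteq> {}"
proof
  assume CJ: "C \<inter> Jw = {}"
  define I where "I = inside Jw"
  define Ou where "Ou = outside Jw"
  have J: "open I" "open Ou" "I \<inter> Ou = {}" "I \<union> Ou = - Jw" "frontier I = Jw" "frontier Ou = Jw"
    using Jordan_inside_outside[OF sp] Jw unfolding I_def Ou_def by auto
  have cl: "0 \<in> closure I" "0 \<in> closure Ou"
    using J(5,6) Jw(2) frontier_def by auto
  define K where "K = (\<lambda>\<sigma>::real. {w. \<sigma> * Im w > m * \<bar>Re w\<bar> \<and> cmod w < r0})"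
  have Kdis: "K \<sigma> \<inter> Jw = {}" if "\<sigma> = 1 \<or> \<sigma> = -1" for \<sigma>
  proof -
    { fix w assume w: "w \<in> K \<sigma>" "w \<in> Jw"
      hence "\<bar>Im w\<bar> \<le> m * \<bar>Re w\<bar>" using cone unfolding K_def by auto
      hence False using w that unfolding K_def by auto }
    thus ?thesis by blast
  qed
  have Kside: "K \<sigma> \<subseteq> I \<or> K \<sigma> \<subseteq> Ou" if "\<sigma> = 1 \<or> \<sigma> = -1" for \<sigma>
  proof -
    have "connected (K \<sigma>)" unfolding K_def using m by (intro convex_connected cone_convex) auto
    moreover have "K \<sigma> \<subseteq> I \<union> Ou" using Kdis[OF that] J by auto
    ultimately have "I \<inter> K \<sigma> = {} \<or> Ou \<inter> K \<sigma> = {}"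
      using connectedD[of "K \<sigma>" I Ou] J by auto
    thus ?thesis using \<open>K \<sigma> \<subseteq> I \<union> Ou\<close> by blast
  qed
  have inj': "\<forall>w1\<in>Jw. \<forall>w2\<in>Jw. cmod w1 < r0 \<longrightarrow> cmod w2 < r0 \<longrightarrow> Re w1 = Re w2 \<longrightarrow> w1 = w2" using inj .
  have n1: "\<not> (K 1 \<subseteq> I \<and> K (-1) \<subseteq> I)"
    using sides_lemma[of I Ou Jw r0 m] J cl r0 m inj unfolding K_def by auto
  have n2: "\<not> (K 1 \<subseteq> Ou \<and> K (-1) \<subseteq> Ou)"
    using sides_lemma[of Ou I Jw r0 m] J cl r0 m inj unfolding K_def by auto
  have q1K: "q1 \<in> K 1" and q2K: "q2 \<in> K (-1)" using q1 q2 unfolding K_def by auto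
  have CIO: "C \<subseteq> I \<union> Ou" using CJ J by auto
  have "K 1 \<subseteq> I \<or> K 1 \<subseteq> Ou" "K (-1) \<subseteq> I \<or> K (-1) \<subseteq> Ou" using Kside by auto
  with n1 n2 have "(K 1 \<subseteq> I \<and> K (-1) \<subseteq> Ou) \<or> (K 1 \<subseteq> Ou \<and> K (-1) \<subseteq> I)" by blast
  then show False
  proof (elim disjE conjE)
    assume "K 1 \<subseteq> I" "K (-1) \<subseteq> Ou"
    thus False using conn_split[of C I Ou q1 q2] J C q1K q2K CIO by auto
  next
    assume "K 1 \<subseteq> Ou" "K (-1) \<subseteq> I"
    thus False using conn_split[of C I Ou q2 q1] J C q1K q2K CIO by auto
  qed
qed



lemma local_open:
  fixes g h :: "real \<Rightarrow> complex"
  assumes sp: "simple_path g" "pathfinish g = pathstart g" "path_image g = J"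
    and hc: "continuous_on {\<alpha><..<\<beta>} h" and hi: "inj_on h {\<alpha><..<\<beta>}" and hJ: "h ` {\<alpha><..<\<beta>} \<subseteq> J"
    and ab: "\<alpha> \<le> a1" "a1 < b1" "b1 < t1" "t1 < \<beta>"
  shows "openin (top_of_set J) (h ` {a1<..<b1})"
proof -
  define P where "P = h t1"
  have PJ: "P \<in> J" using hJ ab unfolding P_def by auto
  have "J homeomorphic sphere (0::complex) 1"
    using homeomorphic_simple_path_image_circle[OF sp(1,2), of 1 0] sp(3) by simp
  then obtain \<psi> \<psi>' where psi: "homeomorphism J (sphere (0::complex) 1) \<psi> \<psi>'"
    unfolding homeomorphic_def by blast
  have psiP: "\<psi> P \<in> sphere (0::complex) 1" using psi PJ unfolding homeomorphism_def by blast
  have "(sphere (0::complex) 1 - {\<psi> P}) homeomorphic {x::complex. 1 \<bullet> x = 0}"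
    by (rule homeomorphic_punctured_sphere_hyperplane) (use psiP in auto)
  then obtain \<sigma> \<sigma>' where sig: "homeomorphism (sphere (0::complex) 1 - {\<psi> P}) {x::complex. 1 \<bullet> x = 0} \<sigma> \<sigma>'"
    unfolding homeomorphic_def by blast
  have psi2: "homeomorphism (J - {P}) (sphere (0::complex) 1 - {\<psi> P}) \<psi> \<psi>'"
  proof (rule homeomorphism_of_subsets[OF psi])
    show "\<psi> ` (J - {P}) = sphere 0 1 - {\<psi> P}"
    proof
      show "\<psi> ` (J - {P}) \<subseteq> sphere 0 1 - {\<psi> P}"
      proof
        fix y assume "y \<in> \<psi> ` (J - {P})"
        then obtain x where x: "x \<in> J" "x \<noteq> P" "y = \<psi> x" by auto
        have "\<psi>' (\<psi> x) = x" "\<psi>' (\<psi> P) = P" "\<psi> x \<in> sphere 0 1"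
          using psi PJ x unfolding homeomorphism_def by auto
        thus "y \<in> sphere 0 1 - {\<psi> P}" using x by auto
      qed
      show "sphere 0 1 - {\<psi> P} \<subseteq> \<psi> ` (J - {P})"
      proof
        fix y assume y: "y \<in> sphere 0 1 - {\<psi> P}"
        hence "\<psi>' y \<in> J" "\<psi> (\<psi>' y) = y" using psi unfolding homeomorphism_def by auto
        moreover have "\<psi>' y \<noteq> P" using y \<open>\<psi> (\<psi>' y) = y\<close> by auto
        ultimately show "y \<in> \<psi> ` (J - {P})" by (metis DiffI empty_iff image_eqI insert_iff)
      qed
    qed
  qed auto
  have tau: "homeomorphism (J - {P}) {x::complex. 1 \<bullet> x = 0} (\<sigma> \<circ> \<psi>) (\<psi>' \<circ> \<sigma>')"
    by (rule homeomorphism_compose[OF psi2 sig])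
  define \<tau> where "\<tau> = \<sigma> \<circ> \<psi>"
  have tauc: "continuous_on (J - {P}) \<tau>" and tauH: "\<And>z. z \<in> J - {P} \<Longrightarrow> Re (\<tau> z) = 0"
    using tau unfolding \<tau>_def homeomorphism_def
    by (auto simp: inner_complex_def)
  have taui: "inj_on \<tau> (J - {P})"
    unfolding \<tau>_def
    by (rule inj_on_inverseI[where g="\<psi>' \<circ> \<sigma>'"]) (rule homeomorphism_apply1[OF tau])
  have Imi: "inj_on (Im \<circ> \<tau>) (J - {P})"
  proof (rule inj_onI)
    fix x y assume "x \<in> J - {P}" "y \<in> J - {P}" "(Im \<circ> \<tau>) x = (Im \<circ> \<tau>) y"
    hence "\<tau> x = \<tau> y" using tauH[of x] tauH[of y] \<open>x \<in> J - {P}\<close> \<open>y \<in> J - {P}\<close>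
      by (simp add: complex_eq_iff)
    thus "x = y" using inj_onD[OF taui] \<open>x \<in> J - {P}\<close> \<open>y \<in> J - {P}\<close> by blast
  qed
  define S where "S = {\<alpha><..<t1}"
  have hS: "h ` S \<subseteq> J - {P}"
  proof
    fix z assume "z \<in> h ` S"
    then obtain t where t: "t \<in> S" "z = h t" by auto
    have "t \<noteq> t1" "t \<in> {\<alpha><..<\<beta>}" "t1 \<in> {\<alpha><..<\<beta>}" using t ab unfolding S_def by auto
    hence "h t \<noteq> h t1" using hi unfolding inj_on_def by blast
    thus "z \<in> J - {P}" using t hJ \<open>t \<in> {\<alpha><..<\<beta>}\<close> unfolding P_def by auto
  qed
  have Ssub: "S \<subseteq> {\<alpha><..<\<beta>}" unfolding S_def using ab by auto
  define f where "f = (Im \<circ> \<tau>) \<circ> h"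
  have fc: "continuous_on S f" unfolding f_def
    by (rule continuous_on_compose[OF continuous_on_subset[OF hc Ssub]])
       (intro continuous_on_compose continuous_on_subset[OF tauc hS] continuous_intros)
  have fi: "inj_on f S" unfolding f_def
    using comp_inj_on[OF inj_on_subset[OF hi Ssub] inj_on_subset[OF Imi hS]] by simp
  have op: "open (f ` {a1<..<b1})"
    by (rule injective_into_1d_imp_open_map_UNIV[OF _ fc fi]) (use ab in \<open>auto simp: S_def\<close>)
  have eq: "h ` {a1<..<b1} = (J - {P}) \<inter> (Im \<circ> \<tau>) -` (f ` {a1<..<b1})"
  proof
    have "{a1<..<b1} \<subseteq> S" using ab unfolding S_def by auto
    thus "h ` {a1<..<b1} \<subseteq> (J - {P}) \<inter> (Im \<circ> \<tau>) -` (f ` {a1<..<b1})"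
      using hS unfolding f_def by auto
  next
    show "(J - {P}) \<inter> (Im \<circ> \<tau>) -` (f ` {a1<..<b1}) \<subseteq> h ` {a1<..<b1}"
    proof
      fix z assume z: "z \<in> (J - {P}) \<inter> (Im \<circ> \<tau>) -` (f ` {a1<..<b1})"
      then obtain t where t: "t \<in> {a1<..<b1}" "(Im \<circ> \<tau>) z = (Im \<circ> \<tau>) (h t)" unfolding f_def by auto
      have "t \<in> S" using t ab unfolding S_def by auto
      hence "h t \<in> J - {P}" using hS by blast
      hence "z = h t" using Imi z t(2) unfolding inj_on_def by blast
      thus "z \<in> h ` {a1<..<b1}" using t by auto
    qed
  qed
  have "openin (top_of_set (J - {P})) (h ` {a1<..<b1})"
    unfolding eq by (rule continuous_openin_preimage_gen[OF _ op])
      (intro continuous_on_compose continuous_intros tauc)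
  moreover have "openin (top_of_set J) (J - {P})"
    by (rule openin_delete) simp
  ultimately show ?thesis by (rule openin_trans)
qed



lemma cone_s:
  fixes \<omega> z :: complex and d \<eta> m :: real
  assumes om: "Im \<omega> \<noteq> 0" and d: "d \<noteq> 0" and z: "cmod (z - of_real d) \<le> \<eta> * \<bar>d\<bar>"
    and mdef: "m = \<bar>Im \<omega>\<bar> / (4 * cmod \<omega>)" and edef: "\<eta> = m / 4"
  shows "sgn (d * Im \<omega>) * Im (\<omega> * z) > m * \<bar>Re (\<omega> * z)\<bar>"
proof -
  define s where "s = \<bar>Im \<omega>\<bar>"
  define N where "N = cmod \<omega>"
  define A where "A = \<bar>d\<bar>"
  define e where "e = z - of_real d"
  define \<sigma> where "\<sigma> = sgn (d * Im \<omega>)"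
  have s0: "s > 0" using om unfolding s_def by simp
  have sN: "s \<le> N" unfolding s_def N_def by (rule abs_Im_le_cmod)
  have N0: "N > 0" using s0 sN by linarith
  have A0: "A > 0" using d unfolding A_def by simp
  have mN: "m * N = s / 4" unfolding mdef s_def[symmetric] N_def[symmetric] using N0 by simp
  have eN: "\<eta> * N = s / 16" using mN unfolding edef by (simp add: field_simps)
  have m14: "m \<le> 1/4" unfolding mdef s_def[symmetric] N_def[symmetric] using N0 sN
    by (simp add: field_simps)
  have m0: "m \<ge> 0" unfolding mdef by simp
  have zz: "\<omega> * z = of_real d * \<omega> + \<omega> * e" unfolding e_def by (simp add: algebra_simps)
  have ne: "cmod (\<omega> * e) \<le> N * (\<eta> * A)" unfolding norm_mult N_def A_def e_def
    using z by (intro mult_left_mono) auto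
  also have "N * (\<eta> * A) = A * (\<eta> * N)" by simp
  also have "\<dots> = A * s / 16" using eN by simp
  finally have ne': "cmod (\<omega> * e) \<le> A * s / 16" .
  have sig: "\<sigma> * (d * Im \<omega>) = A * s"
    unfolding \<sigma>_def A_def s_def using abs_sgn[of "d * Im \<omega>"] by (simp add: abs_mult mult.commute)
  have sig1: "\<bar>\<sigma>\<bar> = 1" unfolding \<sigma>_def using om d by (simp add: sgn_mult abs_mult)
  have "\<bar>\<sigma> * Im (\<omega> * e)\<bar> = \<bar>Im (\<omega> * e)\<bar>" using sig1 by (simp only: abs_mult)
  hence "\<bar>\<sigma> * Im (\<omega> * e)\<bar> \<le> cmod (\<omega> * e)" using abs_Im_le_cmod[of "\<omega> * e"] by linarith
  hence lo: "\<sigma> * Im (\<omega> * z) \<ge> A * s - A * s / 16"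
    using ne' sig unfolding zz by (simp add: algebra_simps)
  have "\<bar>Re (of_real d * \<omega>)\<bar> \<le> A * N" unfolding A_def N_def
    using abs_Re_le_cmod[of "of_real d * \<omega>"] by (simp add: norm_mult)
  moreover have "\<bar>Re (\<omega> * e)\<bar> \<le> A * s / 16" using ne' abs_Re_le_cmod order_trans by blast
  moreover have "Re (\<omega> * z) = Re (of_real d * \<omega>) + Re (\<omega> * e)" unfolding zz by (simp only: plus_complex.sel)
  ultimately have hi: "\<bar>Re (\<omega> * z)\<bar> \<le> A * N + A * s / 16"
    using abs_triangle_ineq[of "Re (of_real d * \<omega>)" "Re (\<omega> * e)"] by linarith
  have "m * \<bar>Re (\<omega> * z)\<bar> \<le> m * (A * N + A * s / 16)" using hi m0 by (rule mult_left_mono)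
  also have "\<dots> = A * (m * N) + m * (A * s / 16)" by (simp add: algebra_simps)
  also have "\<dots> \<le> A * (s / 4) + (1/4) * (A * s / 16)"
    using mN m14 A0 s0 by (intro add_mono mult_right_mono) auto
  also have "\<dots> < A * s - A * s / 16" using A0 s0 by (simp add: field_simps)
  finally show ?thesis using lo unfolding \<sigma>_def by linarith
qed



lemma col_lemma:
  fixes a b c :: complex
  assumes "\<not> collinear {a, b, c}"
  shows "b \<noteq> a" "Im ((c - a) / (b - a)) \<noteq> 0"
proof -
  show ba: "b \<noteq> a"
  proof
    assume "b = a" hence "{a, b, c} = {a, c}" by auto
    thus False using assms by simp
  qed
  show "Im ((c - a) / (b - a)) \<noteq> 0"
  proof
    assume im: "Im ((c - a) / (b - a)) = 0"
    define r where "r = Re ((c - a) / (b - a))"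
    have "(c - a) / (b - a) = of_real r" using im unfolding r_def by (simp add: complex_eq_iff)
    hence "c - a = of_real r * (b - a)" using ba by (simp add: field_simps)
    hence "c = (1 - r) *\<^sub>R a + (1 - (1 - r)) *\<^sub>R b" by (simp add: scaleR_conv_of_real algebra_simps)
    hence "collinear {a, c, b}" unfolding collinear_3_expand by blast
    moreover have "{a, c, b} = {a, b, c}" by auto
    ultimately show False using assms by simp
  qed
qed

lemma tri_lemma:
  fixes a b c z1 z2 A0 :: complex
  assumes ba: "b \<noteq> a" and z1: "z1 \<noteq> A0" and z2: "z2 - A0 = ((c - a) / (b - a)) * (z1 - A0)"
  shows "similar_tri A0 z1 z2 a b c"
  unfolding similar_tri_def
proof (intro exI conjI)
  define r where "r = cmod (z1 - A0) / cmod (b - a)"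
  show "r > 0" using ba z1 unfolding r_def by simp
  show "dist A0 z1 = r * dist a b" unfolding r_def dist_norm using ba
    by (simp add: norm_minus_commute)
  have "z2 - z1 = ((c - b) / (b - a)) * (z1 - A0)"
  proof -
    have "z2 - z1 = (z2 - A0) - (z1 - A0)" by simp
    also have "\<dots> = ((c - a) / (b - a) - 1) * (z1 - A0)" using z2 by (simp add: algebra_simps)
    also have "(c - a) / (b - a) - 1 = (c - b) / (b - a)" using ba by (simp add: field_simps)
    finally show ?thesis .
  qed
  hence "cmod (z2 - z1) = cmod (c - b) / cmod (b - a) * cmod (z1 - A0)"
    by (simp add: norm_mult norm_divide)
  thus "dist z1 z2 = r * dist b c" unfolding r_def dist_norm
    by (simp add: norm_minus_commute[of z1 z2] norm_minus_commute[of b c])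
  show "dist z2 A0 = r * dist c a" unfolding r_def dist_norm using ba z2
    by (simp add: norm_mult norm_divide norm_minus_commute)
qed



lemma mvt_arc:
  fixes h h' :: "real \<Rightarrow> complex"
  assumes d: "\<And>t. t \<in> {t0-\<delta>..t0+\<delta>} \<Longrightarrow> (h has_vector_derivative h' t) (at t)"
    and B: "\<And>t. t \<in> {t0-\<delta>..t0+\<delta>} \<Longrightarrow> cmod (h' t - h' t0) \<le> B"
    and xy: "x \<in> {t0-\<delta>..t0+\<delta>}" "y \<in> {t0-\<delta>..t0+\<delta>}" and "\<delta> \<ge> 0"
  shows "cmod (h y - h x - (y - x) *\<^sub>R h' t0) \<le> \<bar>y - x\<bar> * B"
proof -
  have "closed_segment x y \<subseteq> {t0-\<delta>..t0+\<delta>}"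
    using xy by (intro closed_segment_subset) auto
  from vector_differentiable_bound_linearization[of "{t0-\<delta>..t0+\<delta>}" h h' x y t0 B, OF has_vector_derivative_at_within[OF d] this B]
  show ?thesis using \<open>\<delta> \<ge> 0\<close> by simp
qed

theorem corollary1p5:
  fixes J :: "complex set" and A0 a b c :: complex
  assumes "jordan_curve J" and "A0 \<in> J" and "cont_turning_tangents_near J A0"
    and "\<not> collinear {a, b, c}"
  shows "\<exists>A1 A2. A1 \<in> J \<and> A2 \<in> J \<and> similar_tri A0 A1 A2 a b c"
proof -
  obtain g where g: "simple_path g" "pathfinish g = pathstart g" "path_image g = J"
    using assms(1) unfolding jordan_curve_def by blast
  obtain \<alpha> \<beta> h h' where ab: "\<alpha> < \<beta>" and hi: "inj_on h {\<alpha><..<\<beta>}" and hJ: "h ` {\<alpha><..<\<beta>} \<subseteq> J"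
    and A0h: "A0 \<in> h ` {\<alpha><..<\<beta>}"
    and hd: "\<forall>t\<in>{\<alpha><..<\<beta>}. (h has_vector_derivative h' t) (at t)"
    and h'c: "continuous_on {\<alpha><..<\<beta>} h'" and h'0: "\<forall>t\<in>{\<alpha><..<\<beta>}. h' t \<noteq> 0"
    using assms(3) unfolding cont_turning_tangents_near_def by blast
  obtain t0 where t0: "t0 \<in> {\<alpha><..<\<beta>}" "A0 = h t0" using A0h by blast
  have hc: "continuous_on {\<alpha><..<\<beta>} h"
    using hd by (intro continuous_at_imp_continuous_on) (auto intro: has_vector_derivative_continuous)
  define u where "u = h' t0"
  have u0: "u \<noteq> 0" using h'0 t0 unfolding u_def by auto
  have ba: "b \<noteq> a" and omI: "Im ((c - a) / (b - a)) \<noteq> 0" using col_lemma[OF assms(4)] by auto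
  define \<omega> where "\<omega> = (c - a) / (b - a)"
  have om: "Im \<omega> \<noteq> 0" using omI unfolding \<omega>_def .
  define N where "N = cmod \<omega>"
  define m where "m = \<bar>Im \<omega>\<bar> / (4 * N)"
  define \<eta> where "\<eta> = m / 4"
  have N0: "N > 0" using om unfolding N_def by auto
  have m0: "m > 0" using om N0 unfolding m_def by simp
  have m14: "m \<le> 1/4" unfolding m_def using N0 abs_Im_le_cmod[of \<omega>] unfolding N_def
    by (simp add: field_simps)
  have e0: "\<eta> > 0" using m0 unfolding \<eta>_def by simp
  have "isCont h' t0" using h'c t0 continuous_on_eq_continuous_at[of "{\<alpha><..<\<beta>}" h'] by auto
  then obtain \<delta>1 where d1: "\<delta>1 > 0" "\<And>t. dist t t0 < \<delta>1 \<Longrightarrow> dist (h' t) (h' t0) < \<eta> * cmod u"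
    using u0 e0 unfolding continuous_at_eps_delta by (metis mult_pos_pos zero_less_norm_iff)
  define \<delta> where "\<delta> = min (\<delta>1 / 2) (min ((t0 - \<alpha>) / 2) ((\<beta> - t0) / 2))"
  have \<delta>0: "\<delta> > 0" using d1 t0 unfolding \<delta>_def by auto
  have dbs: "\<delta> \<le> (t0 - \<alpha>) / 2" "\<delta> \<le> (\<beta> - t0) / 2" "\<delta> \<le> \<delta>1 / 2" unfolding \<delta>_def min_def by auto
  hence Isub: "{t0-\<delta>..t0+\<delta>} \<subseteq> {\<alpha><..<\<beta>}" using t0 \<delta>0 by auto
  have Bd: "cmod (h' t - h' t0) \<le> \<eta> * cmod u" if "t \<in> {t0-\<delta>..t0+\<delta>}" for t
  proof -
    have "dist t t0 < \<delta>1" using that \<delta>0 d1 \<open>\<delta> \<le> \<delta>1 / 2\<close> unfolding dist_real_def by auto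
    thus ?thesis using d1(2) by (simp add: dist_norm less_imp_le)
  qed
  define hw where "hw = (\<lambda>t. (h t - A0) / u)"
  have mv: "cmod (hw y - hw x - of_real (y - x)) \<le> \<eta> * \<bar>y - x\<bar>"
    if "x \<in> {t0-\<delta>..t0+\<delta>}" "y \<in> {t0-\<delta>..t0+\<delta>}" for x y
  proof -
    have "cmod (h y - h x - (y - x) *\<^sub>R h' t0) \<le> \<bar>y - x\<bar> * (\<eta> * cmod u)"
      by (rule mvt_arc[of t0 \<delta> h h' "\<eta> * cmod u", OF _ Bd that]) (use hd Isub \<delta>0 in auto)
    have eqd: "hw y - hw x - of_real (y - x) = (h y - h x - (y - x) *\<^sub>R h' t0) / u"
      unfolding hw_def u_def using u0 unfolding u_def by (simp add: field_simps scaleR_conv_of_real)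
    have "cmod (hw y - hw x - of_real (y - x)) = cmod (h y - h x - (y - x) *\<^sub>R h' t0) / cmod u"
      unfolding eqd by (simp only: norm_divide)
    also have "\<dots> \<le> (\<bar>y - x\<bar> * (\<eta> * cmod u)) / cmod u"
      using \<open>cmod (h y - h x - (y - x) *\<^sub>R h' t0) \<le> \<bar>y - x\<bar> * (\<eta> * cmod u)\<close> u0
      by (intro divide_right_mono) auto
    also have "\<dots> = \<eta> * \<bar>y - x\<bar>" using u0 by simp
    finally show ?thesis .
  qed
  have hw0: "hw t0 = 0" unfolding hw_def t0 by simp
  have key: "cmod (hw t - of_real (t - t0)) \<le> \<eta> * \<bar>t - t0\<bar>" if "t \<in> {t0-\<delta>..t0+\<delta>}" for t
    using mv[OF _ that, of t0] \<delta>0 hw0 by simp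
  have "openin (top_of_set J) (h ` {t0-\<delta><..<t0+\<delta>})"
    by (rule local_open[OF g hc hi hJ, of "t0-\<delta>" "t0+\<delta>" "(t0+\<delta>+\<beta>)/2"])
       (use t0 \<delta>0 dbs in auto)
  moreover have "A0 \<in> h ` {t0-\<delta><..<t0+\<delta>}" unfolding t0(2) using \<delta>0 by (intro imageI) simp
  ultimately have "\<exists>e>0. \<forall>x'\<in>J. dist x' A0 < e \<longrightarrow> x' \<in> h ` {t0-\<delta><..<t0+\<delta>}"
    unfolding openin_euclidean_subtopology_iff by blast
  then obtain R where R: "R > 0" "\<And>z. z \<in> J \<Longrightarrow> dist z A0 < R \<Longrightarrow> z \<in> h ` {t0-\<delta><..<t0+\<delta>}"
    by blast
  define r0 where "r0 = R / cmod u"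
  have r0: "r0 > 0" using R u0 unfolding r0_def by simp
  define F where "F = (\<lambda>z. (z - A0) / u)"
  define Jw where "Jw = F ` J"
  have Finj: "inj F" unfolding F_def using u0 by (intro injI) (simp add: field_simps)
  have Fc: "continuous_on S F" for S unfolding F_def using u0 by (intro continuous_intros) auto
  have loc: "\<exists>t. t \<in> {t0-\<delta><..<t0+\<delta>} \<and> w = hw t" if wJ: "w \<in> Jw" "cmod w < r0" for w
  proof -
    obtain z where z: "z \<in> J" "w = F z" using wJ unfolding Jw_def by auto
    have "dist z A0 = cmod u * cmod w" using u0 unfolding z F_def dist_norm by (simp add: norm_divide)
    also have "\<dots> < cmod u * r0" using wJ u0 by simp
    also have "\<dots> = R" unfolding r0_def using u0 by simp
    finally obtain t where "t \<in> {t0-\<delta><..<t0+\<delta>}" "z = h t" using R z by blast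
    thus ?thesis using z unfolding F_def hw_def by auto
  qed
  have cone: "\<forall>w\<in>Jw. cmod w < r0 \<longrightarrow> \<bar>Im w\<bar> \<le> m * \<bar>Re w\<bar>"
  proof (intro ballI impI)
    fix w assume "w \<in> Jw" "cmod w < r0"
    then obtain t where t: "t \<in> {t0-\<delta><..<t0+\<delta>}" "w = hw t" using loc by blast
    define d where "d = t - t0"
    have k: "cmod (w - of_real d) \<le> \<eta> * \<bar>d\<bar>" using key[of t] t unfolding d_def by auto
    have "\<bar>Im w\<bar> \<le> \<eta> * \<bar>d\<bar>" using k abs_Im_le_cmod[of "w - of_real d"] by simp
    moreover have "\<bar>Re w - d\<bar> \<le> \<eta> * \<bar>d\<bar>" using k abs_Re_le_cmod[of "w - of_real d"] by simp
    hence "\<bar>Re w\<bar> \<ge> (1 - \<eta>) * \<bar>d\<bar>" by (simp add: algebra_simps)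
    hence "m * \<bar>Re w\<bar> \<ge> m * ((1 - \<eta>) * \<bar>d\<bar>)" using m0 by (simp add: mult_left_mono)
    moreover have "m * ((1 - \<eta>) * \<bar>d\<bar>) \<ge> \<eta> * \<bar>d\<bar>"
    proof -
      have "\<eta> \<le> m * (1 - \<eta>)" unfolding \<eta>_def using m0 m14 by (simp add: field_simps)
      thus ?thesis by (metis abs_ge_zero mult.assoc mult_right_mono)
    qed
    ultimately show "\<bar>Im w\<bar> \<le> m * \<bar>Re w\<bar>" by linarith
  qed
  have injw: "\<forall>w1\<in>Jw. \<forall>w2\<in>Jw. cmod w1 < r0 \<longrightarrow> cmod w2 < r0 \<longrightarrow> Re w1 = Re w2 \<longrightarrow> w1 = w2"
  proof (intro ballI impI)
    fix w1 w2 assume w: "w1 \<in> Jw" "w2 \<in> Jw" "cmod w1 < r0" "cmod w2 < r0" "Re w1 = Re w2"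
    obtain t1 where t1: "t1 \<in> {t0-\<delta><..<t0+\<delta>}" "w1 = hw t1" using loc w by blast
    obtain t2 where t2: "t2 \<in> {t0-\<delta><..<t0+\<delta>}" "w2 = hw t2" using loc w by blast
    have k: "cmod (w2 - w1 - of_real (t2 - t1)) \<le> \<eta> * \<bar>t2 - t1\<bar>" using mv[of t1 t2] t1 t2 by auto
    hence "\<bar>Re (w2 - w1 - of_real (t2 - t1))\<bar> \<le> \<eta> * \<bar>t2 - t1\<bar>" using abs_Re_le_cmod order_trans by blast
    hence "\<bar>t2 - t1\<bar> \<le> \<eta> * \<bar>t2 - t1\<bar>" using w(5) by simp
    moreover have "\<eta> < 1" using m14 unfolding \<eta>_def by simp
    ultimately have "t1 = t2"
      by (metis abs_ge_zero abs_le_zero_iff diff_self eq_iff_diff_eq_0 mult_le_cancel_right1 not_le)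
    thus "w1 = w2" using t1 t2 by simp
  qed
  obtain s0 where s0: "s0 \<in> {0..1}" "g s0 = A0" using assms(2) g(3) unfolding path_image_def by auto
  define g2 where "g2 = shiftpath s0 g"
  have g2: "simple_path g2" "path_image g2 = J" "pathstart g2 = A0" "pathfinish g2 = A0"
    unfolding g2_def using simple_path_shiftpath[OF g(1,2)] path_image_shiftpath[OF s0(1) g(2)]
      endpoints_shiftpath[OF g(2) s0(1)] s0 g(3) by auto
  have conJ: "connected (J - {A0})" using connected_simple_path_endless[OF g2(1)] g2 by simp
  define C where "C = (\<lambda>z. \<omega> * F z) ` (J - {A0})"
  have Cc: "connected C" unfolding C_def F_def
    by (rule connected_continuous_image[OF _ conJ]) (use u0 in \<open>intro continuous_intros, auto\<close>)
  define \<gamma> where "\<gamma> = F \<circ> g"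
  have \<gamma>: "simple_path \<gamma>" "pathfinish \<gamma> = pathstart \<gamma>" "path_image \<gamma> = Jw"
    unfolding \<gamma>_def Jw_def
    using simple_path_continuous_image[OF g(1) Fc inj_on_subset[OF Finj]] g(2,3)
    by (auto simp: pathstart_compose pathfinish_compose path_image_compose)
  have Jw0: "0 \<in> Jw" unfolding Jw_def F_def using assms(2) by force
  define d where "d = min (\<delta>/2) (r0 / (4 * (N + 1)))"
  have d0: "d > 0" unfolding d_def using \<delta>0 r0 N0 by auto
  have dd: "d \<le> \<delta>/2" "d \<le> r0 / (4 * (N + 1))" unfolding d_def min_def by auto
  have tp: "t0 + d \<in> {t0-\<delta>..t0+\<delta>}" "t0 - d \<in> {t0-\<delta>..t0+\<delta>}" using dd d0 by auto
  have kp: "cmod (hw (t0 + d) - of_real d) \<le> \<eta> * \<bar>d\<bar>" using key[OF tp(1)] by simp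
  have km: "cmod (hw (t0 - d) - of_real (-d)) \<le> \<eta> * \<bar>-d\<bar>" using key[OF tp(2)] by simp
  have nb: "cmod (\<omega> * hw t) < r0" if "cmod (hw t - of_real e) \<le> \<eta> * \<bar>e\<bar>" "\<bar>e\<bar> = d" for t e
  proof -
    have "cmod (hw t) \<le> cmod (of_real e :: complex) + cmod (hw t - of_real e)"
      by (metis add.commute diff_add_cancel norm_triangle_ineq)
    also have "\<dots> \<le> d + \<eta> * d" using that by simp
    also have "\<dots> \<le> 2 * d" using m14 d0 unfolding \<eta>_def by simp
    finally have "cmod (hw t) \<le> 2 * d" .
    hence "cmod (\<omega> * hw t) \<le> N * (2 * d)" unfolding N_def norm_mult by (simp add: mult_left_mono)
    also have "\<dots> \<le> N * (2 * (r0 / (4 * (N + 1))))" using dd N0 by (intro mult_left_mono) auto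
    also have "\<dots> < r0" using N0 r0 by (simp add: field_simps add_pos_pos)
    finally show ?thesis .
  qed
  have np: "cmod (\<omega> * hw (t0 + d)) < r0" using nb[OF kp] d0 by simp
  have nm: "cmod (\<omega> * hw (t0 - d)) < r0" using nb[OF km] d0 by simp
  have cp: "sgn (d * Im \<omega>) * Im (\<omega> * hw (t0 + d)) > m * \<bar>Re (\<omega> * hw (t0 + d))\<bar>"
    by (rule cone_s[OF om _ kp]) (use d0 in \<open>auto simp: m_def N_def \<eta>_def\<close>)
  have cm: "sgn (-d * Im \<omega>) * Im (\<omega> * hw (t0 - d)) > m * \<bar>Re (\<omega> * hw (t0 - d))\<bar>"
    by (rule cone_s[OF om _ km]) (use d0 in \<open>auto simp: m_def N_def \<eta>_def\<close>)
  have inC: "\<omega> * hw (t0 + d) \<in> C" "\<omega> * hw (t0 - d) \<in> C"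
  proof -
    have "t0 + d \<in> {\<alpha><..<\<beta>}" "t0 - d \<in> {\<alpha><..<\<beta>}" using tp Isub by (meson subsetD)+
    hence "h (t0 + d) \<noteq> A0" "h (t0 - d) \<noteq> A0" "h (t0 + d) \<in> J" "h (t0 - d) \<in> J"
      using hi hJ t0 d0 unfolding inj_on_def by (auto, force+)
    thus "\<omega> * hw (t0 + d) \<in> C" "\<omega> * hw (t0 - d) \<in> C"
      unfolding C_def hw_def F_def by auto
  qed
  have m1: "m \<le> 1" using m14 by simp
  have "C \<inter> Jw \<noteq> {}"
  proof (cases "Im \<omega> > 0")
    case True
    hence "sgn (d * Im \<omega>) = 1" "sgn (-d * Im \<omega>) = -1" using d0 by (auto simp: sgn_mult)
    thus ?thesis using core[OF \<gamma> Jw0 r0 m0 m1 cone injw Cc inC(1) inC(2)] cp cm np nm by simp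
  next
    case False
    hence "Im \<omega> < 0" using om by simp
    hence "sgn (d * Im \<omega>) = -1" "sgn (-d * Im \<omega>) = 1" using d0 by (auto simp: sgn_mult)
    thus ?thesis using core[OF \<gamma> Jw0 r0 m0 m1 cone injw Cc inC(2) inC(1)] cp cm np nm by simp
  qed
  then obtain w where w: "w \<in> C" "w \<in> Jw" by blast
  obtain z1 where z1: "z1 \<in> J" "z1 \<noteq> A0" "w = \<omega> * F z1" using w(1) unfolding C_def by auto
  obtain z2 where z2: "z2 \<in> J" "w = F z2" using w(2) unfolding Jw_def by auto
  have "z2 - A0 = \<omega> * (z1 - A0)"
  proof -
    have "z2 - A0 = u * F z2" unfolding F_def using u0 by simp
    also have "\<dots> = u * (\<omega> * F z1)" using z1 z2 by simp
    also have "\<dots> = \<omega> * (z1 - A0)" unfolding F_def using u0 by (simp add: field_simps)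
    finally show ?thesis .
  qed
  hence "similar_tri A0 z1 z2 a b c" using tri_lemma[OF ba z1(2)] unfolding \<omega>_def by simp
  thus ?thesis using z1 z2 by blast
qed


end
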